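(* Let $\lambda,\mu\in P^+$ and let $X\subseteq\mathcal{B}(\lambda)$, $Y\subseteq\mathcal{B}(\mu)$ be subsets. If $X\otimes Y$ is an extremal subset of $\mathcal{B}(\lambda)\otimes\mathcal{B}(\mu)$, then $e_i(X)\subseteq X\sqcup\{0\}$ for all $i\in I$. Furthermore, if in addition $e_i(Y)\subseteq Y\sqcup\{0\}$ for all $i\in I$, then $X$ is an extremal subset of $\mathcal{B}(\lambda)$.
   Context: $\mathfrak g$ is a complex semisimple Lie algebra with Dynkin index set $I$ and dominant weights $P^+$. For $\lambda\in P^+$, $\mathcal{B}(\lambda)$ is Kashiwara's crystal of the irreducible module of highest weight $\lambda$, with operators $e_i,f_i:\mathcal{B}(\lambda)\to\mathcal{B}(\lambda)\sqcup\{0\}$, $\varepsilon_i(b)=\max\{k:e_i^k(b)\ne0\}$, $\varphi_i(b)=\max\{k:f_i^k(b)\ne0\}$. The tensor product crystal $\mathcal{B}(\lambda)\otimes\mathcal{B}(\mu)$ has $e_i(b_1\otimes b_2)=e_i(b_1)\otimes b_2$ if $\varepsilon_i(b_2)\le\varphi_i(b_1)$, else $b_1\otimes e_i(b_2)$; $f_i(b_1\otimes b_2)=f_i(b_1)\otimes b_2$ if $\varepsilon_i(b_2)<\varphi_i(b_1)$, else $b_1\otimes f_i(b_2)$. An $i$-string is a connected component of the graph with edges $b\to f_i(b)$. A subset $X$ of a crystal $\mathcal{B}$ is extremal if $X$ is nonempty and for every $i\in I$ and every $i$-string $S$ of $\mathcal{B}$, $S\cap X$ is $\varnothing$, $S$,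 or $\{b\}$ with $b\in S$, $e_i(b)=0$. *)

theory Defs
  imports Main
begin

text \<open>An abstract (seminormal, finite) crystal: a carrier set with Kashiwara
operators e_i, f_i; the value None plays the role of 0.\<close>

record ('i, 'b) crystal =
  carrier :: "'b set"
  eop :: "'i \<Rightarrow> 'b \<Rightarrow> 'b option"
  fop :: "'i \<Rightarrow> 'b \<Rightarrow> 'b option"

definition epow :: "('i, 'b) crystal \<Rightarrow> 'i \<Rightarrow> nat \<Rightarrow> 'b \<Rightarrow> 'b option" where
  "epow C i k b = ((\<lambda>x. Option.bind x (eop C i)) ^^ k) (Some b)"

definition fpow :: "('i, 'b) crystal \<Rightarrow> 'i \<Rightarrow> nat \<Rightarrow> 'b \<Rightarrow> 'b option" where
  "fpow C i k b = ((\<lambda>x. Option.bind x (fop C i)) ^^ k) (Some b)"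

definition eps :: "('i, 'b) crystal \<Rightarrow> 'i \<Rightarrow> 'b \<Rightarrow> nat" where
  "eps C i b = (GREATEST k. epow C i k b \<noteq> None)"

definition phi :: "('i, 'b) crystal \<Rightarrow> 'i \<Rightarrow> 'b \<Rightarrow> nat" where
  "phi C i b = (GREATEST k. fpow C i k b \<noteq> None)"

definition finite_crystal :: "('i, 'b) crystal \<Rightarrow> bool" where
  "finite_crystal C \<longleftrightarrow>
     finite (carrier C) \<and>
     (\<forall>i b b'. b \<in> carrier C \<and> eop C i b = Some b' \<longrightarrow> b' \<in> carrier C) \<and>
     (\<forall>i b b'. b \<in> carrier C \<and> fop C i b = Some b' \<longrightarrow> b' \<in> carrier C) \<and>
     (\<forall>i b b'. b \<in> carrier C \<and> b' \<in> carrier C \<longrightarrow>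
        (eop C i b = Some b' \<longleftrightarrow> fop C i b' = Some b)) \<and>
     (\<forall>i b. b \<in> carrier C \<longrightarrow> (\<exists>k. epow C i k b = None) \<and> (\<exists>k. fpow C i k b = None))"

definition tensor :: "('i, 'b) crystal \<Rightarrow> ('i, 'c) crystal \<Rightarrow> ('i, 'b \<times> 'c) crystal" where
  "tensor C D =
     \<lparr> carrier = carrier C \<times> carrier D,
       eop = (\<lambda>i (b1, b2). if eps D i b2 \<le> phi C i b1
                             then map_option (\<lambda>x. (x, b2)) (eop C i b1)
                             else map_option (\<lambda>y. (b1, y)) (eop D i b2)),
       fop = (\<lambda>i (b1, b2). if eps D i b2 < phi C i b1
                             then map_option (\<lambda>x. (x, b2)) (fop C i b1)
                             else map_option (\<lambda>y. (b1, y)) (fop D i b2)) \<rparr>"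

definition istep :: "('i, 'b) crystal \<Rightarrow> 'i \<Rightarrow> ('b \<times> 'b) set" where
  "istep C i = {(b, b'). b \<in> carrier C \<and> b' \<in> carrier C \<and> fop C i b = Some b'}"

definition is_string :: "('i, 'b) crystal \<Rightarrow> 'i \<Rightarrow> 'b set \<Rightarrow> bool" where
  "is_string C i S \<longleftrightarrow>
     (\<exists>b \<in> carrier C. S = {b'. (b, b') \<in> (istep C i \<union> (istep C i)\<inverse>)\<^sup>*})"

definition extremal :: "('i, 'b) crystal \<Rightarrow> 'b set \<Rightarrow> bool" where
  "extremal C X \<longleftrightarrow> X \<noteq> {} \<and>
     (\<forall>i S. is_string C i S \<longrightarrow>
        S \<inter> X = {} \<or> S \<inter> X = S \<or> (\<exists>b \<in> S. S \<inter> X = {b} \<and> eop C i b = None))"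

definition e_closed :: "('i, 'b) crystal \<Rightarrow> 'b set \<Rightarrow> bool" where
  "e_closed C X \<longleftrightarrow> (\<forall>i x x'. x \<in> X \<and> eop C i x = Some x' \<longrightarrow> x' \<in> X)"

end

theory Submission
  imports Defs
begin

definition itr :: "('b \<Rightarrow> 'b option) \<Rightarrow> nat \<Rightarrow> 'b \<Rightarrow> 'b option" where
  "itr g k b = ((\<lambda>x. Option.bind x g) ^^ k) (Some b)"

lemma epow_itr: "epow C i = itr (eop C i)"
  by (auto simp: fun_eq_iff epow_def itr_def)
lemma fpow_itr: "fpow C i = itr (fop C i)"
  by (auto simp: fun_eq_iff fpow_def itr_def)

lemma none_fix: "((\<lambda>x. Option.bind x (g :: 'a \<Rightarrow> 'a option)) ^^ k) None = None"
  by (induction k) simp_all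

lemma itr_0[simp]: "itr g 0 b = Some b" by (simp add: itr_def)

lemma itr_Suc_Some: "g b = Some b' \<Longrightarrow> itr g (Suc k) b = itr g k b'"
  by (simp add: itr_def funpow_Suc_right del: funpow.simps)

lemma itr_Suc_None: "g b = None \<Longrightarrow> itr g (Suc k) b = None"
  by (simp add: itr_def funpow_Suc_right none_fix del: funpow.simps)

lemma itr_down: "itr g k b = None \<Longrightarrow> k \<le> m \<Longrightarrow> itr g m b = None"
proof -
  assume a: "itr g k b = None" "k \<le> m"
  then obtain d where "m = d + k" by (metis add.commute le_Suc_ex)
  then show ?thesis using a by (simp add: itr_def funpow_add none_fix)
qed

lemma G_bound: "itr g n b = None \<Longrightarrow> itr g k b \<noteq> None \<Longrightarrow> k < n"
  using itr_down by (metis not_le)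

lemma G_None: "g b = None \<Longrightarrow> (GREATEST k. itr g k b \<noteq> None) = 0"
  apply (rule Greatest_equality)
   apply simp
  by (metis itr_Suc_None not0_implies_Suc le_refl)

lemma G_Some:
  assumes "g b = Some b'" "itr g n b' = None"
  shows "(GREATEST k. itr g k b \<noteq> None) = Suc (GREATEST k. itr g k b' \<noteq> None)"
proof (rule Greatest_equality)
  have "itr g (GREATEST k. itr g k b' \<noteq> None) b' \<noteq> None"
  proof -
    have "\<forall>y. itr g y b' \<noteq> None \<longrightarrow> y \<le> n" using G_bound[OF assms(2)] less_imp_le by blast
    then show ?thesis using GreatestI_nat[where k=0 and b=n and P="\<lambda>k. itr g k b' \<noteq> None"] by simp
  qed
  then show "itr g (Suc (GREATEST k. itr g k b' \<noteq> None)) b \<noteq> None"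
    using itr_Suc_Some[where g=g, OF assms(1)] by simp
next
  fix y assume y: "itr g y b \<noteq> None"
  show "y \<le> Suc (GREATEST k. itr g k b' \<noteq> None)"
  proof (cases y)
    case (Suc k)
    then have "itr g k b' \<noteq> None" using y itr_Suc_Some[where g=g, OF assms(1)] by simp
    then have "k \<le> (GREATEST k. itr g k b' \<noteq> None)"
      by (rule Greatest_le_nat[where b=n]) (use G_bound[OF assms(2)] less_imp_le in blast)
    then show ?thesis using Suc by simp
  qed simp
qed

lemma eps_None: "eop C i b = None \<Longrightarrow> eps C i b = 0"
  unfolding eps_def epow_itr by (rule G_None)
lemma phi_None: "fop C i b = None \<Longrightarrow> phi C i b = 0"
  unfolding phi_def fpow_itr by (rule G_None)

lemma fc_e: "finite_crystal C \<Longrightarrow> b \<in> carrier C \<Longrightarrow> eop C i b = Some b' \<Longrightarrow>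
   b' \<in> carrier C \<and> fop C i b' = Some b"
  unfolding finite_crystal_def by blast
lemma fc_f: "finite_crystal C \<Longrightarrow> b \<in> carrier C \<Longrightarrow> fop C i b = Some b' \<Longrightarrow>
   b' \<in> carrier C \<and> eop C i b' = Some b"
  unfolding finite_crystal_def by blast
lemma fc_fin: "finite_crystal C \<Longrightarrow> b \<in> carrier C \<Longrightarrow>
   (\<exists>k. itr (eop C i) k b = None) \<and> (\<exists>k. itr (fop C i) k b = None)"
  unfolding finite_crystal_def epow_itr fpow_itr by blast

lemma eps_Some: "finite_crystal C \<Longrightarrow> b \<in> carrier C \<Longrightarrow> eop C i b = Some b' \<Longrightarrow>
   eps C i b = Suc (eps C i b')"
  unfolding eps_def epow_itr using fc_e fc_fin by (metis G_Some)
lemma phi_Some: "finite_crystal C \<Longrightarrow> b \<in> carrier C \<Longrightarrow> fop C i b = Some b' \<Longrightarrow>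
   phi C i b = Suc (phi C i b')"
  unfolding phi_def fpow_itr using fc_f fc_fin by (metis G_Some)

lemma eps_pos: "eps C i b > 0 \<Longrightarrow> eop C i b \<noteq> None"
  using eps_None by fastforce

lemma e_phi: "finite_crystal C \<Longrightarrow> b \<in> carrier C \<Longrightarrow> eop C i b = Some b' \<Longrightarrow>
   phi C i b' = Suc (phi C i b)"
proof -
  assume a: "finite_crystal C" "b \<in> carrier C" "eop C i b = Some b'"
  then have "b' \<in> carrier C \<and> fop C i b' = Some b" by (rule fc_e)
  then show ?thesis using phi_Some[OF a(1)] by blast
qed

lemma sym_rt: "(a, c) \<in> (R \<union> R\<inverse>)\<^sup>* \<Longrightarrow> (c, a) \<in> (R \<union> R\<inverse>)\<^sup>*"
proof -
  assume "(a, c) \<in> (R \<union> R\<inverse>)\<^sup>*"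
  then have "(c, a) \<in> ((R \<union> R\<inverse>)\<inverse>)\<^sup>*" by (simp add: rtrancl_converse)
  moreover have "(R \<union> R\<inverse>)\<inverse> = R \<union> R\<inverse>" by auto
  ultimately show ?thesis by simp
qed

lemma rt_map:
  assumes "(a, c) \<in> R\<^sup>*" "\<And>u v. (u, v) \<in> R \<Longrightarrow> (h u, h v) \<in> R'"
  shows "(h a, h c) \<in> R'\<^sup>*"
  using assms(1)
proof (induction rule: rtrancl_induct)
  case (step v w)
  then show ?case using assms(2) by (meson rtrancl.rtrancl_into_rtrancl)
qed simp

lemma tensor_carrier[simp]: "carrier (tensor C D) = carrier C \<times> carrier D"
  by (simp add: tensor_def)
lemma tensor_eop: "eop (tensor C D) i (a, b) = (if eps D i b \<le> phi C i a
                             then map_option (\<lambda>x. (x, b)) (eop C i a)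
                             else map_option (\<lambda>y. (a, y)) (eop D i b))"
  by (simp add: tensor_def)
lemma tensor_fop: "fop (tensor C D) i (a, b) = (if eps D i b < phi C i a
                             then map_option (\<lambda>x. (x, b)) (fop C i a)
                             else map_option (\<lambda>y. (a, y)) (fop D i b))"
  by (simp add: tensor_def)

theorem proposition8p1:
  fixes C :: "('i, 'b) crystal" and D :: "('i, 'c) crystal"
    and X :: "'b set" and Y :: "'c set"
  assumes "finite_crystal C" and "finite_crystal D"
    and "X \<subseteq> carrier C" and "Y \<subseteq> carrier D"
    and "extremal (tensor C D) (X \<times> Y)"
  shows "e_closed C X \<and> (e_closed D Y \<longrightarrow> extremal C X)"
proof -
  let ?T = "tensor C D"
  have cC: "finite_crystal C" and cD: "finite_crystal D" by fact+
  from assms(5) have ne: "X \<times> Y \<noteq> {}" and ext: "\<And>i S. is_string ?T i S \<Longrightarrow>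
        S \<inter> (X \<times> Y) = {} \<or> S \<inter> (X \<times> Y) = S \<or> (\<exists>b \<in> S. S \<inter> (X \<times> Y) = {b} \<and> eop ?T i b = None)"
    unfolding extremal_def by blast+
  have strT: "is_string ?T i {p. ((x, y), p) \<in> (istep ?T i \<union> (istep ?T i)\<inverse>)\<^sup>*}"
    if "x \<in> carrier C" "y \<in> carrier D" for i x y
    unfolding is_string_def using that by auto
  have part1: "e_closed C X"
    unfolding e_closed_def
  proof (intro allI impI, elim conjE)
    fix i x x' assume xX: "x \<in> X" and ex: "eop C i x = Some x'"
    have xc: "x \<in> carrier C" using xX assms(3) by blast
    have x'c: "x' \<in> carrier C" and fx': "fop C i x' = Some x" using fc_e[OF cC xc ex] by auto
    have phx': "phi C i x' = Suc (phi C i x)" using e_phi[OF cC xc ex] .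
    obtain y0 where y0: "y0 \<in> Y" using ne by blast
    have y0c: "y0 \<in> carrier D" using y0 assms(4) by blast
    let ?R = "istep ?T i \<union> (istep ?T i)\<inverse>"
    have path: "\<forall>y \<in> carrier D. eps D i y \<le> phi C i x + n \<longrightarrow> (\<exists>y''. ((x, y), (x', y'')) \<in> ?R\<^sup>*)" for n
    proof (induction n)
      case 0
      show ?case
      proof (intro ballI impI)
        fix y assume yc: "y \<in> carrier D" and le: "eps D i y \<le> phi C i x + 0"
        have "fop ?T i (x', y) = Some (x, y)" using le phx' fx' by (simp add: tensor_fop)
        then have "((x', y), (x, y)) \<in> istep ?T i" using x'c xc yc by (simp add: istep_def)
        then show "\<exists>y''. ((x, y), (x', y'')) \<in> ?R\<^sup>*" by blast
      qed
    next
      case (Suc n)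
      show ?case
      proof (intro ballI impI)
        fix y assume yc: "y \<in> carrier D" and le: "eps D i y \<le> phi C i x + Suc n"
        show "\<exists>y''. ((x, y), (x', y'')) \<in> ?R\<^sup>*"
        proof (cases "eps D i y \<le> phi C i x")
          case True
          have "fop ?T i (x', y) = Some (x, y)" using True phx' fx' by (simp add: tensor_fop)
          then have "((x', y), (x, y)) \<in> istep ?T i" using x'c xc yc by (simp add: istep_def)
          then show ?thesis by blast
        next
          case False
          have "eop D i y \<noteq> None" using False eps_pos[of D i y] by simp
          then obtain y1 where ey: "eop D i y = Some y1" by blast
          have y1c: "y1 \<in> carrier D" and fy1: "fop D i y1 = Some y" using fc_e[OF cD yc ey] by auto
          have epy: "eps D i y = Suc (eps D i y1)" using eps_Some[OF cD yc ey] .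
          have "fop ?T i (x, y1) = Some (x, y)" using False epy fy1 by (simp add: tensor_fop)
          then have e1: "((x, y1), (x, y)) \<in> istep ?T i" using xc y1c yc by (simp add: istep_def)
          have "eps D i y1 \<le> phi C i x + n" using le epy by simp
          then obtain y'' where "((x, y1), (x', y'')) \<in> ?R\<^sup>*" using Suc.IH y1c by blast
          moreover have "((x, y), (x, y1)) \<in> ?R" using e1 by blast
          ultimately show ?thesis by (meson converse_rtrancl_into_rtrancl)
        qed
      qed
    qed
    obtain y'' where p: "((x, y0), (x', y'')) \<in> ?R\<^sup>*"
      using path[of "eps D i y0"] y0c by auto
    have enz: "eop ?T i (x, y0) \<noteq> None"
    proof (cases "eps D i y0 \<le> phi C i x")
      case True then show ?thesis using ex by (simp add: tensor_eop)
    next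
      case False then have "eop D i y0 \<noteq> None" using eps_pos[of D i y0] by simp
      then show ?thesis using False by (simp add: tensor_eop)
    qed
    let ?S = "{p. ((x, y0), p) \<in> ?R\<^sup>*}"
    have inS: "(x, y0) \<in> ?S \<inter> (X \<times> Y)" using xX y0 by simp
    from ext[OF strT[OF xc y0c, of i]] show "x' \<in> X"
    proof (elim disjE)
      assume "?S \<inter> (X \<times> Y) = {}" then show ?thesis using inS by blast
    next
      assume a: "?S \<inter> (X \<times> Y) = ?S"
      have "(x', y'') \<in> ?S" using p by simp
      then have "(x', y'') \<in> X \<times> Y" using a by (metis IntE)
      then show ?thesis by simp
    next
      assume "\<exists>b \<in> ?S. ?S \<inter> (X \<times> Y) = {b} \<and> eop ?T i b = None"
      then obtain b where "?S \<inter> (X \<times> Y) = {b}" "eop ?T i b = None" by blast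
      then show ?thesis using inS enz by (metis singletonD)
    qed
  qed
  have part2: "extremal C X" if eY: "e_closed D Y"
  proof -
    have Xne: "X \<noteq> {}" using ne by blast
    obtain y00 where y00: "y00 \<in> Y" using ne by blast
    show ?thesis unfolding extremal_def
    proof (intro conjI allI impI)
      show "X \<noteq> {}" by fact
      fix i S assume "is_string C i S"
      then obtain b0 where b0: "b0 \<in> carrier C" and Sdef: "S = {b'. (b0, b') \<in> (istep C i \<union> (istep C i)\<inverse>)\<^sup>*}"
        unfolding is_string_def by blast
      show "S \<inter> X = {} \<or> S \<inter> X = S \<or> (\<exists>b\<in>S. S \<inter> X = {b} \<and> eop C i b = None)"
      proof (cases "S \<inter> X = {}")
        case True then show ?thesis by blast
      next
        case False
        then obtain x where xS: "x \<in> S" and xX: "x \<in> X" by blast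
        have xc: "x \<in> carrier C" using xX assms(3) by blast
        have "\<exists>y \<in> Y. eop D i y = None"
        proof -
          obtain k where k: "itr (eop D i) k y00 = None" using fc_fin[OF cD] y00 assms(4) by blast
          have "\<forall>z \<in> Y. itr (eop D i) m z = None \<longrightarrow> (\<exists>y \<in> Y. eop D i y = None)" for m
          proof (induction m)
            case 0 then show ?case by simp
          next
            case (Suc m)
            show ?case
            proof (intro ballI impI)
              fix z assume zY: "z \<in> Y" and "itr (eop D i) (Suc m) z = None"
              show "\<exists>y \<in> Y. eop D i y = None"
              proof (cases "eop D i z")
                case None then show ?thesis using zY by blast
              next
                case (Some z')
                then have "z' \<in> Y" using eY zY unfolding e_closed_def by blast
                moreover have "itr (eop D i) m z' = None"
                  using itr_Suc_Some[where g="eop D i", OF Some] \<open>itr (eop D i) (Suc m) z = None\<close> by simp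
                ultimately show ?thesis using Suc.IH by blast
              qed
            qed
          qed
          then show ?thesis using k y00 by blast
        qed
        then obtain y where yY: "y \<in> Y" and ey: "eop D i y = None" by blast
        have yc: "y \<in> carrier D" using yY assms(4) by blast
        have epy: "eps D i y = 0" using eps_None[OF ey] .
        let ?RC = "istep C i \<union> (istep C i)\<inverse>"
        let ?R = "istep ?T i \<union> (istep ?T i)\<inverse>"
        have edge: "((u, y), (v, y)) \<in> istep ?T i" if "(u, v) \<in> istep C i" for u v
        proof -
          have uc: "u \<in> carrier C" and vc: "v \<in> carrier C" and fu: "fop C i u = Some v"
            using that by (auto simp: istep_def)
          have "phi C i u = Suc (phi C i v)" using phi_Some[OF cC uc fu] .
          then have "fop ?T i (u, y) = Some (v, y)" using epy fu by (simp add: tensor_fop)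
          then show ?thesis using uc vc yc by (simp add: istep_def)
        qed
        have emb: "((u, y), (v, y)) \<in> ?R\<^sup>*" if "(u, v) \<in> ?RC\<^sup>*" for u v
        proof -
          have edgeR: "((u', y), (v', y)) \<in> ?R" if "(u', v') \<in> ?RC" for u' v'
            using that
          proof (elim UnE)
            assume "(u', v') \<in> istep C i"
            then show ?thesis using edge by (intro UnI1)
          next
            assume "(u', v') \<in> (istep C i)\<inverse>"
            then have "(v', u') \<in> istep C i" by (rule converseD)
            then have "((v', y), (u', y)) \<in> istep ?T i" by (rule edge)
            then show ?thesis by (intro UnI2 converseI)
          qed
          show ?thesis using rt_map[OF that, of "\<lambda>z. (z, y)", OF edgeR] by simp
        qed
        have "(b0, x) \<in> ?RC\<^sup>*" using xS Sdef by simp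
        then have xS': "(x, b0) \<in> ?RC\<^sup>*" by (rule sym_rt)
        have Ssub: "(z, y) \<in> {p. ((x, y), p) \<in> ?R\<^sup>*}" if "z \<in> S" for z
        proof -
          have "(b0, z) \<in> ?RC\<^sup>*" using that Sdef by blast
          then have "(x, z) \<in> ?RC\<^sup>*" using xS' by (meson rtrancl_trans)
          then show ?thesis using emb by blast
        qed
        let ?S = "{p. ((x, y), p) \<in> ?R\<^sup>*}"
        have inS: "(x, y) \<in> ?S \<inter> (X \<times> Y)" using xX yY by simp
        from ext[OF strT[OF xc yc, of i]] show ?thesis
        proof (elim disjE)
          assume "?S \<inter> (X \<times> Y) = {}" then show ?thesis using inS by blast
        next
          assume a: "?S \<inter> (X \<times> Y) = ?S"
          have "S \<subseteq> X"
          proof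
            fix z assume "z \<in> S"
            then have "(z, y) \<in> ?S" by (rule Ssub)
            then have "(z, y) \<in> X \<times> Y" using a by (metis IntE)
            then show "z \<in> X" by simp
          qed
          then show ?thesis by blast
        next
          assume "\<exists>b \<in> ?S. ?S \<inter> (X \<times> Y) = {b} \<and> eop ?T i b = None"
          then obtain b where b1: "?S \<inter> (X \<times> Y) = {b}" and b2: "eop ?T i b = None" by blast
          have "b = (x, y)" using inS b1 by (metis singletonD)
          then have sg: "?S \<inter> (X \<times> Y) = {(x, y)}" and en: "eop ?T i (x, y) = None"
            using b1 b2 by simp_all
          have "S \<inter> X = {x}"
          proof
            show "S \<inter> X \<subseteq> {x}"
            proof
              fix z assume "z \<in> S \<inter> X"
              then have "(z, y) \<in> ?S \<inter> (X \<times> Y)" using Ssub[of z] yY by simp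
              then show "z \<in> {x}" using sg by blast
            qed
          qed (use xS xX in blast)
          moreover have "eop C i x = None" using en epy by (simp add: tensor_eop)
          ultimately show ?thesis using xS by blast
        qed
      qed
    qed
  qed
  show ?thesis using part1 part2 by blast
qed

end
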